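(* For $p$ an odd prime, $H(p-1)\equiv (-1)^{\frac{p-1}{2}}\,(p-1)!! \pmod p$.
   Context: For a natural number $n$, the double factorial $n!!$ is the product of the natural numbers less than or equal to $n$ that have the same parity as $n$. The hyperfactorial is $H(n)=\prod_{k=1}^{n} k^k$. *)

theory Defs
  imports "HOL-Number_Theory.Number_Theory"
begin

definition double_fact :: "nat \<Rightarrow> nat" where
  "double_fact n = (\<Prod>k\<in>{k\<in>{1..n}. even k = even n}. k)"

definition hyperfact :: "nat \<Rightarrow> nat" where
  "hyperfact n = (\<Prod>k=1..n. k ^ k)"

end

theory Submission
  imports Defs
begin

lemma factor_cong:
  fixes p k :: nat
  assumes p: "prime p" "odd p" and k: "odd k" "1 \<le> k" "k \<le> p - 1"
  shows "[int k ^ k * int (p - k) ^ (p - k) = int k] (mod int p)"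
proof -
  have ev: "even (p - k)" using p k by auto
  have c1: "[int (p - k) = - int k] (mod int p)"
    using k by (simp add: cong_iff_dvd_diff of_nat_diff)
  have "[int (p - k) ^ (p - k) = (- int k) ^ (p - k)] (mod int p)"
    by (rule cong_pow[OF c1])
  also have "(- int k) ^ (p - k) = int k ^ (p - k)" using ev by simp
  finally have c2: "[int (p - k) ^ (p - k) = int k ^ (p - k)] (mod int p)" .
  have nd: "\<not> p dvd k" using k p(1) by (auto dest: dvd_imp_le)
  have "[k ^ (p - 1) = 1] (mod p)" using fermat_theorem[OF p(1) nd] .
  hence f: "[int k ^ (p - 1) = 1] (mod int p)"
    by (metis cong_int_iff of_nat_1 of_nat_power)
  have "[int k ^ k * int (p - k) ^ (p - k) = int k ^ k * int k ^ (p - k)] (mod int p)"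
    by (rule cong_mult[OF cong_refl c2])
  also have "int k ^ k * int k ^ (p - k) = int k * int k ^ (p - 1)"
    using k p by (simp flip: power_add power_Suc)
  also have "[int k * int k ^ (p - 1) = int k * 1] (mod int p)"
    by (rule cong_mult[OF cong_refl f])
  finally show ?thesis by simp
qed

theorem theorem11:
  fixes p :: nat
  assumes "prime p" and "odd p"
  shows "[int (hyperfact (p - 1)) = (-1) ^ ((p - 1) div 2) * int (double_fact (p - 1))] (mod int p)"
proof -
  have p2: "p \<ge> 2" using assms(1) prime_ge_2_nat by blast
  define Od where "Od = {k\<in>{1..p-1}. odd k}"
  define E where "E = {k\<in>{1..p-1}. even k}"
  have fOd: "finite Od" and fE: "finite E" unfolding Od_def E_def by auto
  have split: "{1..p-1} = Od \<union> E" "Od \<inter> E = {}" unfolding Od_def E_def by auto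
  have inj: "inj_on (\<lambda>k. p - k) Od" unfolding Od_def inj_on_def by auto
  have img: "E = (\<lambda>k. p - k) ` Od"
  proof
    show "(\<lambda>k. p - k) ` Od \<subseteq> E" unfolding Od_def E_def using assms(2) by auto
    show "E \<subseteq> (\<lambda>k. p - k) ` Od"
    proof
      fix x assume "x \<in> E"
      hence "p - x \<in> Od" "x = p - (p - x)" unfolding Od_def E_def using assms(2) by auto
      thus "x \<in> (\<lambda>k. p - k) ` Od" by blast
    qed
  qed
  have cardOd: "card Od = (p - 1) div 2"
  proof -
    have "card Od + card E = p - 1" using split fOd fE
      by (metis card_Un_disjoint card_atLeastAtMost diff_Suc_1 add_diff_cancel_right')
    moreover have "card E = card Od" using img inj card_image by metis
    ultimately show ?thesis by simp
  qed
  have H: "int (hyperfact (p - 1)) = (\<Prod>k\<in>Od. int k ^ k) * (\<Prod>k\<in>E. int k ^ k)"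
    unfolding hyperfact_def of_nat_prod of_nat_power split(1)
    by (rule prod.union_disjoint[OF fOd fE split(2)])
  also have "(\<Prod>k\<in>E. int k ^ k) = (\<Prod>k\<in>Od. int (p - k) ^ (p - k))"
    unfolding img by (rule prod.reindex[OF inj, unfolded comp_def])
  also have "(\<Prod>k\<in>Od. int k ^ k) * (\<Prod>k\<in>Od. int (p - k) ^ (p - k))
      = (\<Prod>k\<in>Od. int k ^ k * int (p - k) ^ (p - k))" by (simp add: prod.distrib)
  also have "[\<dots> = (\<Prod>k\<in>Od. int k)] (mod int p)"
    by (rule cong_prod) (use factor_cong[OF assms] in \<open>auto simp: Od_def\<close>)
  finally have A: "[int (hyperfact (p - 1)) = (\<Prod>k\<in>Od. int k)] (mod int p)" .
  have dfE: "double_fact (p - 1) = (\<Prod>k\<in>E. k)"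
    unfolding double_fact_def E_def using assms(2) by (intro prod.cong) auto
  have "int (double_fact (p - 1)) = (\<Prod>k\<in>Od. int (p - k))"
    unfolding dfE of_nat_prod img by (rule prod.reindex[OF inj, unfolded comp_def])
  also have "[\<dots> = (\<Prod>k\<in>Od. - int k)] (mod int p)"
    by (rule cong_prod) (auto simp: Od_def cong_iff_dvd_diff of_nat_diff)
  also have "(\<Prod>k\<in>Od. - int k) = (-1) ^ card Od * (\<Prod>k\<in>Od. int k)"
    by (simp add: prod_uminus)
  finally have B: "[int (double_fact (p - 1)) = (-1) ^ card Od * (\<Prod>k\<in>Od. int k)] (mod int p)" .
  have "[(-1) ^ card Od * int (double_fact (p - 1)) = (-1) ^ card Od * ((-1) ^ card Od * (\<Prod>k\<in>Od. int k))] (mod int p)"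
    by (rule cong_mult[OF cong_refl B])
  also have "(-1) ^ card Od * ((-1) ^ card Od * (\<Prod>k\<in>Od. int k)) = (\<Prod>k\<in>Od. int k)"
    by (simp flip: mult.assoc power_add) 
  finally show ?thesis using A cardOd by (metis cong_sym cong_trans)
qed

end
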